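(* Fix $b\in\mathbb{Z}^{V_+}_{\ge0}$. For every $\bar x\in\mathcal{X}$, $$\mathrm{FLOW}(\bar x)=\Big\{y\in[\mathbf 0,b]^N:\ y^\xi(S)\ge\frac{d^\xi(S)}{C}+\bar x(E(S))-|S|\ \ \forall\emptyset\ne S\subseteq V_+,\ \forall\xi\in[N]\Big\}.$$
   Context: $G=(V,E)$ complete undirected graph with $V=\{0\}\cup V_+$ ($0$ depot, $V_+$ customers); $D=(V,A)$ replaces each edge by two opposite arcs; $\delta^-(v)$, $\delta^+(v)$ are the arcs entering/leaving $v$. Capacity $C>0$; scenarios $\xi\in[N]$ with demands $d^\xi\in\mathbb{Q}^{V_+}_{\ge0}$, $d^\xi(v)\le C$, probabilities $p_\xi\ge0$ summing to $1$; $\bar d=\sum_\xi p_\xi d^\xi$. $f(S)=\sum_{i\in S}f(i)$; $\delta(S)$: edges with exactly one end in $S$; $E(S)$: edges with both ends in $S$. $\mathcal{X}$ is one of $\mathcal{X}_{\mathrm{sub}}=\{x\in[0,2]^E: x(\delta(v))=2\ \forall v\in V_+,\ x(E(S))\le|S|-1\ \forall\emptyset\ne S\subseteq V_+\}$ or $\mathcal{X}_{\mathrm{cvrp}}=\mathcal{X}_{\mathrm{sub}}\cap\{x:x(\delta(0))=2k,\ x(E(S))\le|S|-\lceil\bar d(S)/C\rceil\}$. $[\mathbf 0,b]^N=\{y\in\mathbb{R}^{[N]\times V_+}:0\le y^\xi_v\le b_v\}$. For $\bar x\in\mathcal{X}$, $\mathrm{FLOW}(\bar x)$ is the set of $y\in[\mathbf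 0,b]^N$ for which there exist $f\in\mathbb{R}^{[N]\times A}_{\ge0}$, $g\in\mathbb{R}^{[N]\times V_+}_{\ge0}$ with $f^\xi(\delta^-(v))+d^\xi(v)=f^\xi(\delta^+(v))+g^\xi_v$ for all $v\in V_+,\xi$; $f^\xi_{(u,v)}\le\frac{C}{2}\bar x_{\{u,v\}}$ for all $(u,v)\in A,\xi$; $g^\xi_v\le Cy^\xi_v$ for all $v,\xi$. *)

theory Defs
  imports Complex_Main
begin

text \<open>Conventions: customers V+ = {1..n}, depot 0, V = {0..n}.
  Undirected edges are 2-element sets; arcs are ordered pairs.
  Scenarios [N] = {1..N}. Vectors indexed by scenarios/vertices are functions.\<close>

definition cust :: "nat \<Rightarrow> nat set" where
  "cust n = {1..n}"

definition verts :: "nat \<Rightarrow> nat set" where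
  "verts n = {0..n}"

definition edges :: "nat \<Rightarrow> nat set set" where
  "edges n = {{u, v} | u v. u \<in> verts n \<and> v \<in> verts n \<and> u \<noteq> v}"

definition arcs :: "nat \<Rightarrow> (nat \<times> nat) set" where
  "arcs n = {(u, v). u \<in> verts n \<and> v \<in> verts n \<and> u \<noteq> v}"

definition arcs_in :: "nat \<Rightarrow> nat \<Rightarrow> (nat \<times> nat) set" where
  "arcs_in n v = {a \<in> arcs n. snd a = v}"

definition arcs_out :: "nat \<Rightarrow> nat \<Rightarrow> (nat \<times> nat) set" where
  "arcs_out n v = {a \<in> arcs n. fst a = v}"

definition cut_edges :: "nat \<Rightarrow> nat set \<Rightarrow> nat set set" where
  "cut_edges n S = {e \<in> edges n. card (e \<inter> S) = 1}"

definition inner_edges :: "nat \<Rightarrow> nat set \<Rightarrow> nat set set" where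
  "inner_edges n S = {e \<in> edges n. e \<subseteq> S}"

definition Xsub :: "nat \<Rightarrow> (nat set \<Rightarrow> real) set" where
  "Xsub n = {x. (\<forall>e \<in> edges n. 0 \<le> x e \<and> x e \<le> 2)
     \<and> (\<forall>v \<in> cust n. (\<Sum>e \<in> cut_edges n {v}. x e) = 2)
     \<and> (\<forall>S. S \<noteq> {} \<and> S \<subseteq> cust n \<longrightarrow>
           (\<Sum>e \<in> inner_edges n S. x e) \<le> real (card S) - 1)}"

definition dbar :: "nat \<Rightarrow> (nat \<Rightarrow> real) \<Rightarrow> (nat \<Rightarrow> nat \<Rightarrow> real) \<Rightarrow> nat \<Rightarrow> real" where
  "dbar N p d v = (\<Sum>\<xi> \<in> {1..N}. p \<xi> * d \<xi> v)"

definition Xcvrp :: "nat \<Rightarrow> real \<Rightarrow> nat \<Rightarrow> nat \<Rightarrow> (nat \<Rightarrow> real) \<Rightarrow> (nat \<Rightarrow> nat \<Rightarrow> real)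
    \<Rightarrow> (nat set \<Rightarrow> real) set" where
  "Xcvrp n C k N p d = Xsub n \<inter> {x.
       (\<Sum>e \<in> cut_edges n {0}. x e) = 2 * real k
     \<and> (\<forall>S. S \<noteq> {} \<and> S \<subseteq> cust n \<longrightarrow>
           (\<Sum>e \<in> inner_edges n S. x e)
             \<le> real (card S) - of_int \<lceil>(\<Sum>v \<in> S. dbar N p d v) / C\<rceil>)}"

text \<open>The box [0,b]^N (only the coordinates in [N] x V+ matter).\<close>
definition box :: "nat \<Rightarrow> nat \<Rightarrow> (nat \<Rightarrow> int) \<Rightarrow> (nat \<Rightarrow> nat \<Rightarrow> real) set" where
  "box n N b = {y. \<forall>\<xi> \<in> {1..N}. \<forall>v \<in> cust n. 0 \<le> y \<xi> v \<and> y \<xi> v \<le> of_int (b v)}"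

definition FLOW :: "nat \<Rightarrow> nat \<Rightarrow> real \<Rightarrow> (nat \<Rightarrow> nat \<Rightarrow> real) \<Rightarrow> (nat \<Rightarrow> int)
    \<Rightarrow> (nat set \<Rightarrow> real) \<Rightarrow> (nat \<Rightarrow> nat \<Rightarrow> real) set" where
  "FLOW n N C d b x = {y \<in> box n N b. \<exists>(f :: nat \<Rightarrow> nat \<times> nat \<Rightarrow> real) (g :: nat \<Rightarrow> nat \<Rightarrow> real).
      (\<forall>\<xi> \<in> {1..N}.
         (\<forall>a \<in> arcs n. 0 \<le> f \<xi> a \<and> f \<xi> a \<le> C / 2 * x {fst a, snd a})
       \<and> (\<forall>v \<in> cust n. 0 \<le> g \<xi> v \<and> g \<xi> v \<le> C * y \<xi> v
           \<and> (\<Sum>a \<in> arcs_in n v. f \<xi> a) + d \<xi> v = (\<Sum>a \<in> arcs_out n v. f \<xi> a) + g \<xi> v))}"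

definition CUTSET :: "nat \<Rightarrow> nat \<Rightarrow> real \<Rightarrow> (nat \<Rightarrow> nat \<Rightarrow> real) \<Rightarrow> (nat \<Rightarrow> int)
    \<Rightarrow> (nat set \<Rightarrow> real) \<Rightarrow> (nat \<Rightarrow> nat \<Rightarrow> real) set" where
  "CUTSET n N C d b x = {y \<in> box n N b. \<forall>S. S \<noteq> {} \<and> S \<subseteq> cust n \<longrightarrow> (\<forall>\<xi> \<in> {1..N}.
      (\<Sum>v \<in> S. y \<xi> v) \<ge> (\<Sum>v \<in> S. d \<xi> v) / C + (\<Sum>e \<in> inner_edges n S. x e) - real (card S))}"

end

theory Submission
  imports Defs "HOL-Analysis.Analysis"
begin

lemma finite_arcs: "finite (arcs n)"
proof -
  have "arcs n \<subseteq> verts n \<times> verts n" by (auto simp: arcs_def)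
  then show ?thesis by (rule finite_subset) (simp add: verts_def)
qed

lemma finite_edges: "finite (edges n)"
proof -
  have "edges n \<subseteq> (\<lambda>(u,v). {u,v}) ` (verts n \<times> verts n)" by (auto simp: edges_def)
  then show ?thesis by (rule finite_subset) (simp add: verts_def)
qed

lemma sum_upd: "finite A \<Longrightarrow> sum (h(a := h a + s)) A = sum h A + (if a \<in> A then s else 0)"
proof (cases "a \<in> A")
  case True
  assume f: "finite A"
  have "sum (h(a := h a + s)) A = (h a + s) + sum (h(a := h a + s)) (A - {a})"
    using f True by (simp add: sum.remove)
  also have "sum (h(a := h a + s)) (A - {a}) = sum h (A - {a})" by (rule sum.cong) auto
  finally show ?thesis using f True by (simp add: sum.remove algebra_simps)
next
  case False
  then show ?thesis by (auto intro: sum.cong)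
qed

lemma sum_in: "finite S \<Longrightarrow> (\<Sum>v\<in>S. \<Sum>a\<in>arcs_in n v. h a) = (\<Sum>a\<in>arcs n. if snd a \<in> S then h a else 0)"
proof -
  assume f: "finite S"
  have "(\<Sum>v\<in>S. \<Sum>a\<in>arcs_in n v. h a) = (\<Sum>v\<in>S. \<Sum>a\<in>arcs n. if snd a = v then h a else 0)"
    unfolding arcs_in_def by (simp add: sum.inter_filter[OF finite_arcs])
  also have "\<dots> = (\<Sum>a\<in>arcs n. \<Sum>v\<in>S. if snd a = v then h a else 0)" by (rule sum.swap)
  also have "\<dots> = (\<Sum>a\<in>arcs n. if snd a \<in> S then h a else 0)" using f by (simp add: sum.delta)
  finally show ?thesis .
qed

lemma sum_out: "finite S \<Longrightarrow> (\<Sum>v\<in>S. \<Sum>a\<in>arcs_out n v. h a) = (\<Sum>a\<in>arcs n. if fst a \<in> S then h a else 0)"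
proof -
  assume f: "finite S"
  have "(\<Sum>v\<in>S. \<Sum>a\<in>arcs_out n v. h a) = (\<Sum>v\<in>S. \<Sum>a\<in>arcs n. if fst a = v then h a else 0)"
    unfolding arcs_out_def by (simp add: sum.inter_filter[OF finite_arcs])
  also have "\<dots> = (\<Sum>a\<in>arcs n. \<Sum>v\<in>S. if fst a = v then h a else 0)" by (rule sum.swap)
  also have "\<dots> = (\<Sum>a\<in>arcs n. if fst a \<in> S then h a else 0)" using f by (simp add: sum.delta)
  finally show ?thesis .
qed

lemma net_flow: fixes h :: "nat \<times> nat \<Rightarrow> real" shows "finite S \<Longrightarrow> (\<Sum>v\<in>S. (\<Sum>a\<in>arcs_in n v. h a) - (\<Sum>a\<in>arcs_out n v. h a))
   = (\<Sum>a\<in>arcs n. if snd a \<in> S \<and> fst a \<notin> S then h a else 0)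
   - (\<Sum>a\<in>arcs n. if fst a \<in> S \<and> snd a \<notin> S then h a else 0)"
proof -
  assume f: "finite S"
  have "(\<Sum>v\<in>S. (\<Sum>a\<in>arcs_in n v. h a) - (\<Sum>a\<in>arcs_out n v. h a))
     = (\<Sum>v\<in>S. (\<Sum>a\<in>arcs_in n v. h a)) - (\<Sum>v\<in>S. (\<Sum>a\<in>arcs_out n v. h a))"
    by (rule sum_subtractf)
  also have "\<dots> = (\<Sum>a\<in>arcs n. if snd a \<in> S then h a else 0) - (\<Sum>a\<in>arcs n. if fst a \<in> S then h a else 0)"
    using sum_in[OF f, where n=n and h=h] sum_out[OF f, where n=n and h=h] by simp
  also have "\<dots> = (\<Sum>a\<in>arcs n. (if snd a \<in> S then h a else 0) - (if fst a \<in> S then h a else 0))"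
    by (rule sum_subtractf[symmetric])
  also have "\<dots> = (\<Sum>a\<in>arcs n. (if snd a \<in> S \<and> fst a \<notin> S then h a else 0)
       - (if fst a \<in> S \<and> snd a \<notin> S then h a else 0))"
    by (rule sum.cong) auto
  finally show ?thesis by (simp add: sum_subtractf)
qed

definition Exc :: "nat \<Rightarrow> (nat \<Rightarrow> real) \<Rightarrow> (nat \<times> nat \<Rightarrow> real) \<Rightarrow> nat \<Rightarrow> real" where
  "Exc n D h v = D v + (\<Sum>a\<in>arcs_in n v. h a) - (\<Sum>a\<in>arcs_out n v. h a) - h (v,v)"

definition Eh :: "nat \<Rightarrow> (nat \<Rightarrow> real) \<Rightarrow> (nat \<times> nat \<Rightarrow> real) \<Rightarrow> nat \<Rightarrow> real" where
  "Eh n D h v = (if v \<in> cust n then Exc n D h v else 0)"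

definition Phi :: "nat \<Rightarrow> (nat \<Rightarrow> real) \<Rightarrow> (nat \<times> nat \<Rightarrow> real) \<Rightarrow> real" where
  "Phi n D h = (\<Sum>v\<in>cust n. (Exc n D h v)^2)"

lemma Ex_upd_arc:
  assumes "(p,q) \<in> arcs n"
  shows "Exc n D (h((p,q) := h(p,q) + s)) v = Exc n D h v + (if v = q then s else 0) - (if v = p then s else 0)"
proof -
  have pq: "p \<noteq> q" using assms by (auto simp: arcs_def)
  have "(p,q) \<in> arcs_in n v \<longleftrightarrow> v = q" using assms by (auto simp: arcs_in_def)
  moreover have "(p,q) \<in> arcs_out n v \<longleftrightarrow> v = p" using assms by (auto simp: arcs_out_def)
  moreover have "finite (arcs_in n v)" "finite (arcs_out n v)"
    by (auto simp: arcs_in_def arcs_out_def intro: finite_subset[OF _ finite_arcs])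
  moreover have "(h((p,q) := h(p,q) + s)) (v,v) = h (v,v)" using pq by auto
  ultimately show ?thesis using pq unfolding Exc_def by (simp add: sum_upd del: fun_upd_apply)
qed

lemma Ex_upd_diag:
  "Exc n D (h((w,w) := h(w,w) + s)) v = Exc n D h v - (if v = w then s else 0)"
proof -
  have "(w,w) \<notin> arcs_in n v" "(w,w) \<notin> arcs_out n v" by (auto simp: arcs_in_def arcs_out_def arcs_def)
  moreover have "finite (arcs_in n v)" "finite (arcs_out n v)"
    by (auto simp: arcs_in_def arcs_out_def intro: finite_subset[OF _ finite_arcs])
  ultimately show ?thesis unfolding Exc_def by (simp add: sum_upd del: fun_upd_apply) simp
qed

lemma Phi_upd_arc:
  assumes "(p,q) \<in> arcs n"
  shows "Phi n D (h((p,q) := h(p,q) + s)) = Phi n D h + 2 * s * (Eh n D h q - Eh n D h p)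
     + s^2 * ((if q \<in> cust n then 1 else 0) + (if p \<in> cust n then 1 else 0))"
proof -
  have pq: "p \<noteq> q" using assms by (auto simp: arcs_def)
  have "Phi n D (h((p,q) := h(p,q) + s)) = (\<Sum>v\<in>cust n. (Exc n D h v)^2 + 2 * s * ((if v = q then Exc n D h v else 0) - (if v = p then Exc n D h v else 0))
      + s^2 * ((if v = q then 1 else 0) + (if v = p then 1 else 0)))"
    unfolding Phi_def Ex_upd_arc[OF assms]
    by (rule sum.cong) (use pq in \<open>auto simp: power2_eq_square algebra_simps\<close>)
  also have "\<dots> = Phi n D h + 2 * s * (Eh n D h q - Eh n D h p)
     + s^2 * ((if q \<in> cust n then 1 else 0) + (if p \<in> cust n then 1 else 0))"
    unfolding Phi_def Eh_def
    by (simp add: sum.distrib sum_subtractf sum_distrib_left[symmetric] sum.delta' cust_def)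
  finally show ?thesis .
qed

lemma Phi_upd_diag:
  assumes "w \<in> cust n"
  shows "Phi n D (h((w,w) := h(w,w) + s)) = Phi n D h - 2 * s * Exc n D h w + s^2"
proof -
  have "Phi n D (h((w,w) := h(w,w) + s)) = (\<Sum>v\<in>cust n. (Exc n D h v)^2 - 2 * s * (if v = w then Exc n D h v else 0)
      + s^2 * (if v = w then 1 else 0))"
    unfolding Phi_def Ex_upd_diag
    by (rule sum.cong) (auto simp: power2_eq_square algebra_simps)
  also have "\<dots> = Phi n D h - 2 * s * Exc n D h w + s^2"
    unfolding Phi_def using assms
    by (simp add: sum.distrib sum_subtractf sum_distrib_left[symmetric] sum.delta' cust_def)
  finally show ?thesis .
qed


lemma compact_box_fun: "compact {h::'a \<Rightarrow> real. \<forall>i. 0 \<le> h i \<and> h i \<le> B i}"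
proof -
  have eq: "{h::'a \<Rightarrow> real. \<forall>i. 0 \<le> h i \<and> h i \<le> B i} = PiE UNIV (\<lambda>i. {0..B i})"
    by (auto simp: PiE_UNIV_domain Pi_def)
  have "compactin (product_topology (\<lambda>i. euclidean) UNIV) (PiE UNIV (\<lambda>i. {0..B i::real}))"
    by (simp add: compactin_PiE)
  then show ?thesis unfolding eq euclidean_product_topology by simp
qed

lemma cont_coord: "continuous_on S (\<lambda>h::'a \<Rightarrow> real. h i)"
  by (rule continuous_on_subset[OF continuous_on_product_coordinates]) simp

lemma cont_Phi: "continuous_on S (Phi n D)"
  unfolding Phi_def Exc_def
  by (intro continuous_on_sum continuous_on_power continuous_on_add continuous_on_diff continuous_on_const cont_coord)

lemma small_neg:
  fixes t d k :: real
  assumes "0 < t" "t \<le> d / 2" "k \<le> 2" "0 \<le> k"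
  shows "- 2 * t * d + t^2 * k < 0"
proof -
  have "t^2 * k \<le> t^2 * 2" using assms by (intro mult_left_mono) auto
  also have "t^2 * 2 = t * (2 * t)" by (simp add: power2_eq_square)
  also have "\<dots> \<le> t * d" using assms by (intro mult_left_mono) auto
  finally have 1: "t^2 * k \<le> t * d" .
  have 2: "0 < t * d" using assms by simp
  show ?thesis using 1 2 by linarith
qed

lemma sum_S_E:
  assumes "finite S"
  shows "(\<Sum>v\<in>S. Exc n D h v) = (\<Sum>v\<in>S. D v)
     + ((\<Sum>a\<in>arcs n. if snd a \<in> S \<and> fst a \<notin> S then h a else 0)
      - (\<Sum>a\<in>arcs n. if fst a \<in> S \<and> snd a \<notin> S then h a else 0))
     - (\<Sum>v\<in>S. h (v,v))"
proof -
  have "(\<Sum>v\<in>S. Exc n D h v) = (\<Sum>v\<in>S. D v + ((\<Sum>a\<in>arcs_in n v. h a) - (\<Sum>a\<in>arcs_out n v. h a)) - h (v,v))"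
    unfolding Exc_def by (rule sum.cong) auto
  also have "\<dots> = (\<Sum>v\<in>S. D v) + (\<Sum>v\<in>S. (\<Sum>a\<in>arcs_in n v. h a) - (\<Sum>a\<in>arcs_out n v. h a)) - (\<Sum>v\<in>S. h (v,v))"
    by (simp add: sum.distrib sum_subtractf)
  finally show ?thesis using net_flow[OF assms, where n=n and h=h] by simp
qed


lemma single:
  fixes D c :: "nat \<Rightarrow> real" and u :: "nat \<times> nat \<Rightarrow> real"
  assumes u0: "\<forall>a\<in>arcs n. 0 \<le> u a" and c0: "\<forall>v\<in>cust n. 0 \<le> c v" and D0: "\<forall>v\<in>cust n. 0 \<le> D v"
    and hyp: "\<forall>S. S \<noteq> {} \<and> S \<subseteq> cust n \<longrightarrow> (\<Sum>v\<in>S. D v) \<le> (\<Sum>v\<in>S. c v)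
        + (\<Sum>a\<in>arcs n. if fst a \<in> S \<and> snd a \<notin> S then u a else 0)"
  shows "\<exists>h. (\<forall>a\<in>arcs n. 0 \<le> h a \<and> h a \<le> u a) \<and> (\<forall>v\<in>cust n. 0 \<le> h (v,v) \<and> h (v,v) \<le> c v \<and> Exc n D h v = 0)"
proof -
  define B where "B a = (if a \<in> arcs n then u a else if fst a = snd a \<and> fst a \<in> cust n then c (fst a) else 0)" for a
  define K where "K = {h::nat \<times> nat \<Rightarrow> real. \<forall>i. 0 \<le> h i \<and> h i \<le> B i}"
  have B0: "0 \<le> B i" for i using u0 c0 by (auto simp: B_def)
  have Barc: "B a = u a" if "a \<in> arcs n" for a using that by (simp add: B_def)
  have Bdiag: "B (v,v) = c v" if "v \<in> cust n" for v using that by (simp add: B_def arcs_def)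
  have "compact K" unfolding K_def by (rule compact_box_fun)
  moreover have "K \<noteq> {}" using B0 unfolding K_def by auto
  moreover have "continuous_on K (Phi n D)" by (rule cont_Phi)
  ultimately obtain h where hK: "h \<in> K" and hmin: "\<And>h'. h' \<in> K \<Longrightarrow> Phi n D h \<le> Phi n D h'"
    using continuous_attains_inf[of K "Phi n D"] by blast
  have hB': "\<forall>i. 0 \<le> h i \<and> h i \<le> B i" using hK unfolding K_def mem_Collect_eq by assumption
  have hB: "0 \<le> h i" "h i \<le> B i" for i using hB' by blast+
  have updK: "h(i := z) \<in> K" if "0 \<le> z" "z \<le> B i" for i z
    using that hB unfolding K_def by auto
  have M1: "Eh n D h a \<le> Eh n D h b" if ab: "(a,b) \<in> arcs n" and lt: "h (a,b) < u (a,b)" for a b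
  proof (rule ccontr)
    assume neg: "\<not> ?thesis"
    define d where "d = Eh n D h a - Eh n D h b"
    have d0: "d > 0" using neg by (simp add: d_def)
    define t where "t = min (u (a,b) - h (a,b)) (d/2)"
    have t0: "t > 0" using d0 lt by (simp add: t_def)
    have tle: "t \<le> d/2" "t \<le> u (a,b) - h (a,b)" unfolding t_def by linarith+
    have "h((a,b) := h (a,b) + t) \<in> K"
      using t0 tle hB[of "(a,b)"] Barc[OF ab] by (intro updK) auto
    then have "Phi n D h \<le> Phi n D (h((a,b) := h (a,b) + t))" by (rule hmin)
    also have "\<dots> = Phi n D h + (- 2 * t * d + t^2 * ((if b \<in> cust n then 1 else 0) + (if a \<in> cust n then 1 else 0)))"
      unfolding Phi_upd_arc[OF ab] d_def by (simp add: algebra_simps)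
    also have "\<dots> < Phi n D h" using small_neg[OF t0 tle(1)] by simp
    finally show False by simp
  qed
  have M2: "Eh n D h a \<le> Eh n D h b" if ab: "(a,b) \<in> arcs n" and gt: "h (b,a) > 0" for a b
  proof (rule ccontr)
    assume neg: "\<not> ?thesis"
    have ba: "(b,a) \<in> arcs n" using ab by (auto simp: arcs_def)
    define d where "d = Eh n D h a - Eh n D h b"
    have d0: "d > 0" using neg by (simp add: d_def)
    define t where "t = min (h (b,a)) (d/2)"
    have t0: "t > 0" using d0 gt by (simp add: t_def)
    have tle: "t \<le> d/2" "t \<le> h (b,a)" unfolding t_def by linarith+
    have "h((b,a) := h (b,a) + - t) \<in> K"
      using t0 tle hB[of "(b,a)"] by (intro updK) auto
    then have "Phi n D h \<le> Phi n D (h((b,a) := h (b,a) + - t))" by (rule hmin)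
    also have "\<dots> = Phi n D h + (- 2 * t * d + t^2 * ((if a \<in> cust n then 1 else 0) + (if b \<in> cust n then 1 else 0)))"
      unfolding Phi_upd_arc[OF ba] d_def by (simp add: algebra_simps)
    also have "\<dots> < Phi n D h" using small_neg[OF t0 tle(1)] by simp
    finally show False by simp
  qed
  have M3: "Exc n D h v \<le> 0" if v: "v \<in> cust n" and lt: "h (v,v) < c v" for v
  proof (rule ccontr)
    assume neg: "\<not> ?thesis"
    define d where "d = Exc n D h v"
    have d0: "d > 0" using neg by (simp add: d_def)
    define t where "t = min (c v - h (v,v)) (d/2)"
    have t0: "t > 0" using d0 lt by (simp add: t_def)
    have tle: "t \<le> d/2" "t \<le> c v - h (v,v)" unfolding t_def by linarith+
    have "h((v,v) := h (v,v) + t) \<in> K"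
      using t0 tle hB[of "(v,v)"] Bdiag[OF v] by (intro updK) auto
    then have "Phi n D h \<le> Phi n D (h((v,v) := h (v,v) + t))" by (rule hmin)
    also have "\<dots> = Phi n D h + (- 2 * t * d + t^2 * 1)"
      unfolding Phi_upd_diag[OF v] d_def by (simp add: algebra_simps)
    also have "\<dots> < Phi n D h" using small_neg[OF t0 tle(1), of 1] by simp
    finally show False by simp
  qed
  have M4: "Exc n D h v \<ge> 0" if v: "v \<in> cust n" and gt: "h (v,v) > 0" for v
  proof (rule ccontr)
    assume neg: "\<not> ?thesis"
    define d where "d = - Exc n D h v"
    have d0: "d > 0" using neg by (simp add: d_def)
    define t where "t = min (h (v,v)) (d/2)"
    have t0: "t > 0" using d0 gt by (simp add: t_def)
    have tle: "t \<le> d/2" "t \<le> h (v,v)" unfolding t_def by linarith+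
    have "h((v,v) := h (v,v) + - t) \<in> K"
      using t0 tle hB[of "(v,v)"] by (intro updK) auto
    then have "Phi n D h \<le> Phi n D (h((v,v) := h (v,v) + - t))" by (rule hmin)
    also have "\<dots> = Phi n D h + (- 2 * t * d + t^2 * 1)"
      unfolding Phi_upd_diag[OF v] d_def by (simp add: algebra_simps)
    also have "\<dots> < Phi n D h" using small_neg[OF t0 tle(1), of 1] by simp
    finally show False by simp
  qed
  have finV: "finite (cust n)" by (simp add: cust_def)
  have arcs_sym: "(b,a) \<in> arcs n" if "(a,b) \<in> arcs n" for a b using that by (auto simp: arcs_def)
  have noPos: "\<not> (\<exists>v\<in>cust n. Exc n D h v > 0)"
  proof
    assume "\<exists>v\<in>cust n. Exc n D h v > 0"
    then obtain v0 where v0: "v0 \<in> cust n" "Exc n D h v0 > 0" by blast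
    define m where "m = Max (Exc n D h ` cust n)"
    have mge: "Exc n D h v \<le> m" if "v \<in> cust n" for v
      unfolding m_def using finV that by (intro Max_ge) auto
    have m0: "m > 0" using mge[OF v0(1)] v0(2) by linarith
    have mmem: "m \<in> Exc n D h ` cust n" using finV v0 unfolding m_def by (intro Max_in) auto
    define S where "S = {v \<in> cust n. Exc n D h v = m}"
    have S: "S \<noteq> {}" "S \<subseteq> cust n" "finite S" using mmem finV by (auto simp: S_def)
    have diag: "h (v,v) = c v" if "v \<in> S" for v
    proof -
      have v: "v \<in> cust n" "Exc n D h v = m" using that by (auto simp: S_def)
      have "h (v,v) \<le> c v" using hB(2)[of "(v,v)"] Bdiag[OF v(1)] by simp
      moreover have "\<not> h (v,v) < c v" using M3[OF v(1)] v(2) m0 by force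
      ultimately show ?thesis by linarith
    qed
    have sat: "h (a,b) = u (a,b) \<and> h (b,a) = 0" if ab: "(a,b) \<in> arcs n" "a \<in> S" "b \<notin> S" for a b
    proof -
      have "Eh n D h b < m"
      proof (cases "b \<in> cust n")
        case True
        then have "Exc n D h b \<noteq> m" using ab by (simp add: S_def)
        with mge[OF True] True show ?thesis by (simp add: Eh_def)
      next
        case False then show ?thesis using m0 by (simp add: Eh_def)
      qed
      moreover have "Eh n D h a = m" using ab by (simp add: S_def Eh_def)
      ultimately have "\<not> h (a,b) < u (a,b)" "\<not> h (b,a) > 0" using M1[OF ab(1)] M2[OF ab(1)] by force+
      moreover have "h (a,b) \<le> u (a,b)" using hB(2)[of "(a,b)"] Barc[OF ab(1)] by simp
      ultimately show ?thesis using hB(1)[of "(b,a)"] by linarith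
    qed
    have "(\<Sum>v\<in>S. Exc n D h v) = (\<Sum>v\<in>S. m)" by (rule sum.cong) (auto simp: S_def)
    then have pos: "(\<Sum>v\<in>S. Exc n D h v) > 0" using S m0 by (simp add: card_gt_0_iff)
    have in0: "(\<Sum>a\<in>arcs n. if snd a \<in> S \<and> fst a \<notin> S then h a else 0) = 0"
    proof (rule sum.neutral, rule ballI)
      fix a assume a: "a \<in> arcs n"
      obtain p q where pq: "a = (p,q)" by (cases a)
      show "(if snd a \<in> S \<and> fst a \<notin> S then h a else 0) = 0"
        using sat[OF arcs_sym[of p q]] a pq by auto
    qed
    have outu: "(\<Sum>a\<in>arcs n. if fst a \<in> S \<and> snd a \<notin> S then h a else 0)
        = (\<Sum>a\<in>arcs n. if fst a \<in> S \<and> snd a \<notin> S then u a else 0)"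
    proof (rule sum.cong[OF refl])
      fix a assume a: "a \<in> arcs n"
      obtain p q where pq: "a = (p,q)" by (cases a)
      show "(if fst a \<in> S \<and> snd a \<notin> S then h a else 0) = (if fst a \<in> S \<and> snd a \<notin> S then u a else 0)"
        using sat[of p q] a pq by auto
    qed
    have diagS: "(\<Sum>v\<in>S. h (v,v)) = (\<Sum>v\<in>S. c v)" by (rule sum.cong) (auto simp: diag)
    have "(\<Sum>v\<in>S. Exc n D h v) = (\<Sum>v\<in>S. D v) - (\<Sum>a\<in>arcs n. if fst a \<in> S \<and> snd a \<notin> S then u a else 0) - (\<Sum>v\<in>S. c v)"
      using sum_S_E[OF S(3), of n D h] in0 outu diagS by simp
    moreover have "(\<Sum>v\<in>S. D v) \<le> (\<Sum>v\<in>S. c v) + (\<Sum>a\<in>arcs n. if fst a \<in> S \<and> snd a \<notin> S then u a else 0)"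
      using hyp S by blast
    ultimately show False using pos by linarith
  qed
  have noNeg: "\<not> (\<exists>v\<in>cust n. Exc n D h v < 0)"
  proof
    assume "\<exists>v\<in>cust n. Exc n D h v < 0"
    then obtain v0 where v0: "v0 \<in> cust n" "Exc n D h v0 < 0" by blast
    define m where "m = Min (Exc n D h ` cust n)"
    have mle: "m \<le> Exc n D h v" if "v \<in> cust n" for v
      unfolding m_def using finV that by (intro Min_le) auto
    have m0: "m < 0" using mle[OF v0(1)] v0(2) by linarith
    have mmem: "m \<in> Exc n D h ` cust n" using finV v0 unfolding m_def by (intro Min_in) auto
    define S where "S = {v \<in> cust n. Exc n D h v = m}"
    have S: "S \<noteq> {}" "S \<subseteq> cust n" "finite S" using mmem finV by (auto simp: S_def)
    have diag: "h (v,v) = 0" if "v \<in> S" for v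
    proof -
      have v: "v \<in> cust n" "Exc n D h v = m" using that by (auto simp: S_def)
      have "0 \<le> h (v,v)" using hB(1)[of "(v,v)"] by simp
      moreover have "\<not> h (v,v) > 0" using M4[OF v(1)] v(2) m0 by force
      ultimately show ?thesis by linarith
    qed
    have sat: "h (b,a) = u (b,a) \<and> h (a,b) = 0" if ab: "(b,a) \<in> arcs n" "a \<in> S" "b \<notin> S" for a b
    proof -
      have "Eh n D h b > m"
      proof (cases "b \<in> cust n")
        case True
        then have "Exc n D h b \<noteq> m" using ab by (simp add: S_def)
        with mle[OF True] True show ?thesis by (simp add: Eh_def)
      next
        case False then show ?thesis using m0 by (simp add: Eh_def)
      qed
      moreover have "Eh n D h a = m" using ab by (simp add: S_def Eh_def)
      ultimately have "\<not> h (b,a) < u (b,a)" "\<not> h (a,b) > 0" using M1[OF ab(1)] M2[OF ab(1)] by force+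
      moreover have "h (b,a) \<le> u (b,a)" using hB(2)[of "(b,a)"] Barc[OF ab(1)] by simp
      ultimately show ?thesis using hB(1)[of "(a,b)"] by linarith
    qed
    have "(\<Sum>v\<in>S. Exc n D h v) = (\<Sum>v\<in>S. m)" by (rule sum.cong) (auto simp: S_def)
    then have neg: "(\<Sum>v\<in>S. Exc n D h v) < 0" using S m0 by (simp add: card_gt_0_iff mult_pos_neg)
    have out0: "(\<Sum>a\<in>arcs n. if fst a \<in> S \<and> snd a \<notin> S then h a else 0) = 0"
    proof (rule sum.neutral, rule ballI)
      fix a assume a: "a \<in> arcs n"
      obtain p q where pq: "a = (p,q)" by (cases a)
      show "(if fst a \<in> S \<and> snd a \<notin> S then h a else 0) = 0"
        using sat[OF arcs_sym[of p q]] a pq by auto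
    qed
    have inu: "(\<Sum>a\<in>arcs n. if snd a \<in> S \<and> fst a \<notin> S then h a else 0)
        = (\<Sum>a\<in>arcs n. if snd a \<in> S \<and> fst a \<notin> S then u a else 0)"
    proof (rule sum.cong[OF refl])
      fix a assume a: "a \<in> arcs n"
      obtain p q where pq: "a = (p,q)" by (cases a)
      show "(if snd a \<in> S \<and> fst a \<notin> S then h a else 0) = (if snd a \<in> S \<and> fst a \<notin> S then u a else 0)"
        using sat[of p q] a pq by auto
    qed
    have diagS: "(\<Sum>v\<in>S. h (v,v)) = 0" by (rule sum.neutral) (auto simp: diag)
    have "(\<Sum>v\<in>S. Exc n D h v) = (\<Sum>v\<in>S. D v) + (\<Sum>a\<in>arcs n. if snd a \<in> S \<and> fst a \<notin> S then u a else 0)"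
      using sum_S_E[OF S(3), of n D h] out0 inu diagS by simp
    moreover have "(\<Sum>v\<in>S. D v) \<ge> 0" using D0 S(2) by (intro sum_nonneg) auto
    moreover have "(\<Sum>a\<in>arcs n. if snd a \<in> S \<and> fst a \<notin> S then u a else 0) \<ge> 0"
      using u0 by (intro sum_nonneg) auto
    ultimately show False using neg by linarith
  qed
  show ?thesis
  proof (intro exI conjI ballI)
    fix a assume a: "a \<in> arcs n"
    show "0 \<le> h a" by (rule hB(1))
    show "h a \<le> u a" using hB(2)[of a] Barc[OF a] by simp
  next
    fix v assume v: "v \<in> cust n"
    show "0 \<le> h (v,v)" by (rule hB(1))
    show "h (v,v) \<le> c v" using hB(2)[of "(v,v)"] Bdiag[OF v] by simp
    show "Exc n D h v = 0" using noPos noNeg v by force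
  qed
qed


lemma deg:
  assumes x: "x \<in> Xsub n" and v: "v \<in> cust n"
  shows "(\<Sum>a\<in>arcs_out n v. x {fst a, snd a}) = 2"
proof -
  have inj: "inj_on (\<lambda>a. {fst a, snd a}) (arcs_out n v)"
    by (auto simp: inj_on_def arcs_out_def arcs_def doubleton_eq_iff prod_eq_iff)
  have img: "(\<lambda>a. {fst a, snd a}) ` arcs_out n v = cut_edges n {v}"
  proof
    show "(\<lambda>a. {fst a, snd a}) ` arcs_out n v \<subseteq> cut_edges n {v}"
    proof
      fix e assume "e \<in> (\<lambda>a. {fst a, snd a}) ` arcs_out n v"
      then obtain q where q: "(v,q) \<in> arcs n" "e = {v,q}" by (auto simp: arcs_out_def)
      then have "e \<inter> {v} = {v}" by auto
      with q show "e \<in> cut_edges n {v}" by (auto simp: cut_edges_def edges_def arcs_def)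
    qed
  next
    show "cut_edges n {v} \<subseteq> (\<lambda>a. {fst a, snd a}) ` arcs_out n v"
    proof
      fix e assume e: "e \<in> cut_edges n {v}"
      then obtain p q where pq: "e = {p,q}" "p \<in> verts n" "q \<in> verts n" "p \<noteq> q"
        by (auto simp: cut_edges_def edges_def)
      have "v \<in> e"
      proof (rule ccontr)
        assume "v \<notin> e" then have "e \<inter> {v} = {}" by auto
        with e show False by (simp add: cut_edges_def)
      qed
      then have "p = v \<or> q = v" using pq by auto
      then show "e \<in> (\<lambda>a. {fst a, snd a}) ` arcs_out n v"
      proof
        assume "p = v"
        then show ?thesis using pq by (auto simp: arcs_out_def arcs_def image_iff intro!: bexI[of _ "(v,q)"])
      next
        assume "q = v"
        then show ?thesis using pq by (auto simp: arcs_out_def arcs_def image_iff intro!: bexI[of _ "(v,p)"])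
      qed
    qed
  qed
  have "(\<Sum>a\<in>arcs_out n v. x {fst a, snd a}) = (\<Sum>e\<in>cut_edges n {v}. x e)"
    unfolding img[symmetric] by (rule sum.reindex[OF inj, symmetric, unfolded comp_def])
  also have "\<dots> = 2" using x v by (simp add: Xsub_def)
  finally show ?thesis .
qed

lemma Sout:
  assumes x: "x \<in> Xsub n" and S: "S \<subseteq> cust n"
  shows "(\<Sum>a\<in>arcs n. if fst a \<in> S then x {fst a, snd a} else 0) = 2 * real (card S)"
proof -
  have f: "finite S" using S finite_subset by (auto simp: cust_def)
  have "(\<Sum>a\<in>arcs n. if fst a \<in> S then x {fst a, snd a} else 0) = (\<Sum>v\<in>S. \<Sum>a\<in>arcs_out n v. x {fst a, snd a})"
    by (rule sum_out[OF f, symmetric])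
  also have "\<dots> = (\<Sum>v\<in>S. 2)" using deg[OF x] S by (intro sum.cong) auto
  finally show ?thesis by simp
qed

lemma Sinner:
  fixes x :: "nat set \<Rightarrow> real"
  assumes S: "S \<subseteq> cust n"
  shows "(\<Sum>a\<in>arcs n. if fst a \<in> S \<and> snd a \<in> S then x {fst a, snd a} else 0) = 2 * (\<Sum>e\<in>inner_edges n S. x e)"
proof -
  define A where "A = {a \<in> arcs n. fst a \<in> S \<and> snd a \<in> S}"
  have fA: "finite A" unfolding A_def using finite_arcs by auto
  have "(\<Sum>a\<in>arcs n. if fst a \<in> S \<and> snd a \<in> S then x {fst a, snd a} else 0) = (\<Sum>a\<in>A. x {fst a, snd a})"
    unfolding A_def by (simp add: sum.inter_filter[OF finite_arcs])
  also have "\<dots> = (\<Sum>e\<in>(\<lambda>a. {fst a, snd a}) ` A. \<Sum>a\<in>{a. a \<in> A \<and> {fst a, snd a} = e}. x {fst a, snd a})"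
    by (rule sum.image_gen[OF fA])
  also have "(\<lambda>a. {fst a, snd a}) ` A = inner_edges n S"
  proof
    show "(\<lambda>a. {fst a, snd a}) ` A \<subseteq> inner_edges n S"
      by (auto simp: A_def arcs_def inner_edges_def edges_def) blast
  next
    show "inner_edges n S \<subseteq> (\<lambda>a. {fst a, snd a}) ` A"
    proof
      fix e assume e: "e \<in> inner_edges n S"
      then obtain p q where pq: "e = {p,q}" "p \<in> verts n" "q \<in> verts n" "p \<noteq> q"
        by (auto simp: inner_edges_def edges_def)
      have "(p,q) \<in> A" using pq e by (auto simp: A_def arcs_def inner_edges_def)
      then show "e \<in> (\<lambda>a. {fst a, snd a}) ` A" using pq by force
    qed
  qed
  also have "(\<Sum>e\<in>inner_edges n S. \<Sum>a\<in>{a. a \<in> A \<and> {fst a, snd a} = e}. x {fst a, snd a})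
      = (\<Sum>e\<in>inner_edges n S. 2 * x e)"
  proof (rule sum.cong[OF refl])
    fix e assume e: "e \<in> inner_edges n S"
    then obtain p q where pq: "e = {p,q}" "p \<in> verts n" "q \<in> verts n" "p \<noteq> q"
      by (auto simp: inner_edges_def edges_def)
    have fib: "{a. a \<in> A \<and> {fst a, snd a} = e} = {(p,q),(q,p)}"
      using pq e by (auto simp: A_def arcs_def inner_edges_def doubleton_eq_iff)
    have "{q,p} = {p,q}" by auto
    then show "(\<Sum>a\<in>{a. a \<in> A \<and> {fst a, snd a} = e}. x {fst a, snd a}) = 2 * x e"
      unfolding fib using pq by simp
  qed
  finally show ?thesis by (simp add: sum_distrib_left)
qed

lemma Uid:
  assumes x: "x \<in> Xsub n" and S: "S \<subseteq> cust n"
  shows "(\<Sum>a\<in>arcs n. if fst a \<in> S \<and> snd a \<notin> S then x {fst a, snd a} else 0)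
     = 2 * real (card S) - 2 * (\<Sum>e\<in>inner_edges n S. x e)"
proof -
  have "(\<Sum>a\<in>arcs n. if fst a \<in> S then x {fst a, snd a} else 0)
     = (\<Sum>a\<in>arcs n. (if fst a \<in> S \<and> snd a \<in> S then x {fst a, snd a} else 0)
         + (if fst a \<in> S \<and> snd a \<notin> S then x {fst a, snd a} else 0))"
    by (rule sum.cong) auto
  also have "\<dots> = (\<Sum>a\<in>arcs n. if fst a \<in> S \<and> snd a \<in> S then x {fst a, snd a} else 0)
     + (\<Sum>a\<in>arcs n. if fst a \<in> S \<and> snd a \<notin> S then x {fst a, snd a} else 0)"
    by (rule sum.distrib)
  finally show ?thesis using Sout[OF x S] Sinner[OF S, of x] by simp
qed

lemma sum_if_mult:
  fixes k :: real
  shows "(\<Sum>a\<in>A. if P a then k * g a else 0) = k * (\<Sum>a\<in>A. if P a then g a else 0)"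
  unfolding sum_distrib_left by (rule sum.cong) auto


theorem proposition2:
  fixes n N k :: nat and C :: real and p :: "nat \<Rightarrow> real"
    and d :: "nat \<Rightarrow> nat \<Rightarrow> real" and b :: "nat \<Rightarrow> int" and x :: "nat set \<Rightarrow> real"
  assumes C_pos: "C > 0"
    and d_rat: "\<forall>\<xi> \<in> {1..N}. \<forall>v \<in> cust n. d \<xi> v \<in> \<rat>"
    and d_nonneg: "\<forall>\<xi> \<in> {1..N}. \<forall>v \<in> cust n. 0 \<le> d \<xi> v"
    and d_le_C: "\<forall>\<xi> \<in> {1..N}. \<forall>v \<in> cust n. d \<xi> v \<le> C"
    and p_nonneg: "\<forall>\<xi> \<in> {1..N}. 0 \<le> p \<xi>"
    and p_sum: "(\<Sum>\<xi> \<in> {1..N}. p \<xi>) = 1"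
    and b_nonneg: "\<forall>v \<in> cust n. 0 \<le> b v"
    and x_in: "x \<in> Xsub n \<or> x \<in> Xcvrp n C k N p d"
  shows "FLOW n N C d b x = CUTSET n N C d b x"
proof -
  have xs: "x \<in> Xsub n" using x_in by (auto simp: Xcvrp_def)
  have xnn: "0 \<le> x {fst a, snd a}" if "a \<in> arcs n" for a
  proof -
    have "{fst a, snd a} \<in> edges n" using that by (auto simp: arcs_def edges_def) blast
    then show ?thesis using xs by (simp add: Xsub_def)
  qed
  define OUT where "OUT S = (\<Sum>a\<in>arcs n. if fst a \<in> S \<and> snd a \<notin> S then C / 2 * x {fst a, snd a} else 0)" for S
  have OUT_eq: "OUT S = C * real (card S) - C * (\<Sum>e\<in>inner_edges n S. x e)" if "S \<subseteq> cust n" for S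
    unfolding OUT_def sum_if_mult Uid[OF xs that] by (simp add: algebra_simps)
  show ?thesis
  proof (intro set_eqI iffI)
    fix y assume y: "y \<in> FLOW n N C d b x"
    then have yb: "y \<in> Defs.box n N b" by (simp add: FLOW_def)
    from y obtain f g where fg: "\<forall>\<xi> \<in> {1..N}.
         (\<forall>a \<in> arcs n. 0 \<le> f \<xi> a \<and> f \<xi> a \<le> C / 2 * x {fst a, snd a})
       \<and> (\<forall>v \<in> cust n. 0 \<le> g \<xi> v \<and> g \<xi> v \<le> C * y \<xi> v
           \<and> (\<Sum>a \<in> arcs_in n v. f \<xi> a) + d \<xi> v = (\<Sum>a \<in> arcs_out n v. f \<xi> a) + g \<xi> v)"
      unfolding FLOW_def by blast
    have "(\<Sum>v\<in>S. y \<xi> v) \<ge> (\<Sum>v\<in>S. d \<xi> v) / C + (\<Sum>e\<in>inner_edges n S. x e) - real (card S)"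
      if S: "S \<noteq> {}" "S \<subseteq> cust n" and xi: "\<xi> \<in> {1..N}" for S \<xi>
    proof -
      have fS: "finite S" using S finite_subset by (auto simp: cust_def)
      have gS: "(\<Sum>v\<in>S. g \<xi> v) = (\<Sum>v\<in>S. d \<xi> v + ((\<Sum>a \<in> arcs_in n v. f \<xi> a) - (\<Sum>a \<in> arcs_out n v. f \<xi> a)))"
        using fg xi S by (intro sum.cong) force+
      also have "\<dots> = (\<Sum>v\<in>S. d \<xi> v) + ((\<Sum>a\<in>arcs n. if snd a \<in> S \<and> fst a \<notin> S then f \<xi> a else 0)
         - (\<Sum>a\<in>arcs n. if fst a \<in> S \<and> snd a \<notin> S then f \<xi> a else 0))"
        by (simp add: sum.distrib net_flow[OF fS])
      finally have gS2: "(\<Sum>v\<in>S. g \<xi> v) = \<dots>" .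
      have in0: "(\<Sum>a\<in>arcs n. if snd a \<in> S \<and> fst a \<notin> S then f \<xi> a else 0) \<ge> 0"
        using fg xi by (intro sum_nonneg) auto
      have outle: "(\<Sum>a\<in>arcs n. if fst a \<in> S \<and> snd a \<notin> S then f \<xi> a else 0) \<le> OUT S"
        unfolding OUT_def using fg xi by (intro sum_mono) auto
      have gle: "(\<Sum>v\<in>S. g \<xi> v) \<le> C * (\<Sum>v\<in>S. y \<xi> v)"
        unfolding sum_distrib_left using fg xi S by (intro sum_mono) auto
      have "(\<Sum>v\<in>S. d \<xi> v) \<le> C * ((\<Sum>v\<in>S. y \<xi> v) - (\<Sum>e\<in>inner_edges n S. x e) + real (card S))"
        using gS2 in0 outle gle OUT_eq[OF S(2)] by (simp add: algebra_simps)
      then have "(\<Sum>v\<in>S. d \<xi> v) / C \<le> (\<Sum>v\<in>S. y \<xi> v) - (\<Sum>e\<in>inner_edges n S. x e) + real (card S)"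
        using C_pos by (simp add: pos_divide_le_eq mult.commute)
      then show ?thesis by simp
    qed
    then show "y \<in> CUTSET n N C d b x" using yb unfolding CUTSET_def by blast
  next
    fix y assume y: "y \<in> CUTSET n N C d b x"
    then have yb: "y \<in> Defs.box n N b" by (simp add: CUTSET_def)
    have ex: "\<exists>h. (\<forall>a\<in>arcs n. 0 \<le> h a \<and> h a \<le> C / 2 * x {fst a, snd a})
       \<and> (\<forall>v\<in>cust n. 0 \<le> h (v,v) \<and> h (v,v) \<le> C * y \<xi> v \<and> Exc n (d \<xi>) h v = 0)"
      if xi: "\<xi> \<in> {1..N}" for \<xi>
    proof (rule single)
      show "\<forall>a\<in>arcs n. 0 \<le> C / 2 * x {fst a, snd a}" using xnn C_pos by simp
      show "\<forall>v\<in>cust n. 0 \<le> C * y \<xi> v" using yb xi C_pos by (simp add: Defs.box_def)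
      show "\<forall>v\<in>cust n. 0 \<le> d \<xi> v" using d_nonneg xi by simp
      show "\<forall>S. S \<noteq> {} \<and> S \<subseteq> cust n \<longrightarrow> (\<Sum>v\<in>S. d \<xi> v) \<le> (\<Sum>v\<in>S. C * y \<xi> v)
        + (\<Sum>a\<in>arcs n. if fst a \<in> S \<and> snd a \<notin> S then C / 2 * x {fst a, snd a} else 0)"
      proof (intro allI impI)
        fix S assume S: "S \<noteq> {} \<and> S \<subseteq> cust n"
        have "(\<Sum>v\<in>S. y \<xi> v) \<ge> (\<Sum>v\<in>S. d \<xi> v) / C + (\<Sum>e\<in>inner_edges n S. x e) - real (card S)"
          using y S xi unfolding CUTSET_def by blast
        then have "(\<Sum>v\<in>S. d \<xi> v) / C \<le> (\<Sum>v\<in>S. y \<xi> v) - (\<Sum>e\<in>inner_edges n S. x e) + real (card S)"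
          by simp
        then have "(\<Sum>v\<in>S. d \<xi> v) \<le> C * ((\<Sum>v\<in>S. y \<xi> v) - (\<Sum>e\<in>inner_edges n S. x e) + real (card S))"
          using C_pos by (simp add: pos_divide_le_eq mult.commute)
        then have "(\<Sum>v\<in>S. d \<xi> v) \<le> (\<Sum>v\<in>S. C * y \<xi> v) + OUT S"
          using OUT_eq[of S] S by (simp add: algebra_simps sum_distrib_left)
        then show "(\<Sum>v\<in>S. d \<xi> v) \<le> (\<Sum>v\<in>S. C * y \<xi> v)
          + (\<Sum>a\<in>arcs n. if fst a \<in> S \<and> snd a \<notin> S then C / 2 * x {fst a, snd a} else 0)"
          unfolding OUT_def .
      qed
    qed
    then obtain H where H: "\<forall>\<xi>\<in>{1..N}. (\<forall>a\<in>arcs n. 0 \<le> H \<xi> a \<and> H \<xi> a \<le> C / 2 * x {fst a, snd a})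
       \<and> (\<forall>v\<in>cust n. 0 \<le> H \<xi> (v,v) \<and> H \<xi> (v,v) \<le> C * y \<xi> v \<and> Exc n (d \<xi>) (H \<xi>) v = 0)"
      by metis
    have "\<forall>\<xi> \<in> {1..N}.
         (\<forall>a \<in> arcs n. 0 \<le> H \<xi> a \<and> H \<xi> a \<le> C / 2 * x {fst a, snd a})
       \<and> (\<forall>v \<in> cust n. 0 \<le> H \<xi> (v,v) \<and> H \<xi> (v,v) \<le> C * y \<xi> v
           \<and> (\<Sum>a \<in> arcs_in n v. H \<xi> a) + d \<xi> v = (\<Sum>a \<in> arcs_out n v. H \<xi> a) + H \<xi> (v,v))"
      using H unfolding Exc_def by (auto simp: algebra_simps)
    then show "y \<in> FLOW n N C d b x" unfolding FLOW_def using yb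
      by (intro CollectI conjI exI[of _ H] exI[of _ "\<lambda>\<xi> v. H \<xi> (v,v)"]) auto
  qed
qed

end
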